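(* Let $d$ be an even positive integer. If $X\subset\Omega(d)$ is a complex spherical $2$-code, then $|X|\le 2d$. Moreover, a tournament $G$ on $2d$ vertices with adjacency matrix $A$ is the tournament of some complex spherical $2$-code $X\subset\Omega(d)$ (necessarily with $|X|=2d$) if and only if $I+A-A^T$ is a skew Hadamard matrix.
   Context: $\Omega(d)=\{x\in\mathbb C^d:x^*x=1\}$. For finite $X\subset\Omega(d)$, $A(X)=\{x^*y:x,y\in X,x\ne y\}$; $X$ is a complex spherical $2$-code if $|A(X)|=2$ and $A(X)$ contains a non-real number, so $A(X)=\{\alpha,\overline\alpha\}$ with $\mathrm{Im}\,\alpha>0$. Its tournament is $(X,E)$ with $E=\{(x,y):x^*y=\alpha\}$, whose adjacency matrix has $A_{xy}=1$ if $(x,y)\in E$ and $0$ otherwise. An $n\times n$ $(\pm1)$-matrix $H$ is skew Hadamard if $H+H^T=2I$ and $HH^T=nI$. *)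

theory Defs
  imports "HOL-Analysis.Analysis"
begin

text \<open>Hermitian inner product x^* y on C^d, with d = CARD('n).\<close>
definition herm_ip :: "complex ^ 'n::finite \<Rightarrow> complex ^ 'n \<Rightarrow> complex" where
  "herm_ip x y = (\<Sum>i\<in>UNIV. cnj (x $ i) * y $ i)"

definition Omega :: "(complex ^ 'n::finite) set" where
  "Omega = {x. herm_ip x x = 1}"

definition inner_set :: "(complex ^ 'n::finite) set \<Rightarrow> complex set" where
  "inner_set X = {herm_ip x y | x y. x \<in> X \<and> y \<in> X \<and> x \<noteq> y}"

definition complex_spherical_2code :: "(complex ^ 'n::finite) set \<Rightarrow> bool" where
  "complex_spherical_2code X \<longleftrightarrow> finite X \<and> X \<subseteq> Omega \<and>
     card (inner_set X) = 2 \<and> (\<exists>a\<in>inner_set X. a \<notin> \<real>)"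

definition code_alpha :: "(complex ^ 'n::finite) set \<Rightarrow> complex" where
  "code_alpha X = (THE a. a \<in> inner_set X \<and> Im a > 0)"

definition code_edge :: "(complex ^ 'n::finite) set \<Rightarrow> complex ^ 'n \<Rightarrow> complex ^ 'n \<Rightarrow> bool" where
  "code_edge X x y \<longleftrightarrow> x \<in> X \<and> y \<in> X \<and> herm_ip x y = code_alpha X"

definition is_tournament :: "nat \<Rightarrow> (nat \<Rightarrow> nat \<Rightarrow> bool) \<Rightarrow> bool" where
  "is_tournament n E \<longleftrightarrow> (\<forall>i<n. \<not> E i i) \<and>
     (\<forall>i<n. \<forall>j<n. i \<noteq> j \<longrightarrow> (E i j \<longleftrightarrow> \<not> E j i))"

definition adj_matrix :: "(nat \<Rightarrow> nat \<Rightarrow> bool) \<Rightarrow> nat \<Rightarrow> nat \<Rightarrow> int" where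
  "adj_matrix E i j = (if E i j then 1 else 0)"

definition is_tournament_of_code ::
  "nat \<Rightarrow> (nat \<Rightarrow> nat \<Rightarrow> bool) \<Rightarrow> (complex ^ 'n::finite) set \<Rightarrow> bool" where
  "is_tournament_of_code n E X \<longleftrightarrow> complex_spherical_2code X \<and>
     (\<exists>f. bij_betw f {..<n} X \<and> (\<forall>i<n. \<forall>j<n. E i j \<longleftrightarrow> code_edge X (f i) (f j)))"

definition skew_hadamard :: "nat \<Rightarrow> (nat \<Rightarrow> nat \<Rightarrow> int) \<Rightarrow> bool" where
  "skew_hadamard n H \<longleftrightarrow>
     (\<forall>i<n. \<forall>j<n. H i j = 1 \<or> H i j = -1) \<and>
     (\<forall>i<n. \<forall>j<n. H i j + H j i = (if i = j then 2 else 0)) \<and>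
     (\<forall>i<n. \<forall>j<n. (\<Sum>k<n. H i k * H j k) = (if i = j then int n else 0))"

end

theory Submission
  imports Defs
begin

lemma herm_ip_cnj: "herm_ip y x = cnj (herm_ip x y)"
  unfolding herm_ip_def by (simp add: mult.commute)

lemma herm_ip_add_right: "herm_ip x (y + z) = herm_ip x y + herm_ip x z"
  unfolding herm_ip_def by (simp add: distrib_left sum.distrib)

lemma herm_ip_add_left: "herm_ip (x + y) z = herm_ip x z + herm_ip y z"
  unfolding herm_ip_def by (simp add: distrib_right sum.distrib)

lemma herm_ip_diff_right: "herm_ip x (y - z) = herm_ip x y - herm_ip x z"
  unfolding herm_ip_def by (simp add: right_diff_distrib sum_subtractf)

lemma herm_ip_scale_right: "herm_ip x (a *s y) = a * herm_ip x y"
  unfolding herm_ip_def by (simp add: sum_distrib_left algebra_simps)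

lemma herm_ip_scale_left: "herm_ip (a *s x) y = cnj a * herm_ip x y"
  unfolding herm_ip_def by (simp add: sum_distrib_left algebra_simps)

lemma herm_ip_sum_right: "herm_ip x (\<Sum>k\<in>K. g k) = (\<Sum>k\<in>K. herm_ip x (g k))"
  unfolding herm_ip_def by (simp add: sum_distrib_left sum.swap[of _ UNIV K])

lemma herm_ip_sum_left: "herm_ip (\<Sum>k\<in>K. g k) y = (\<Sum>k\<in>K. herm_ip (g k) y)"
  by (metis (no_types, lifting) herm_ip_cnj herm_ip_sum_right cnj_sum sum.cong)

lemma herm_ip_zero_right[simp]: "herm_ip x 0 = 0"
  unfolding herm_ip_def by simp

lemma inner_herm: "inner x y = Re (herm_ip x y)"
  unfolding herm_ip_def inner_vec_def inner_complex_def by (simp add: Re_sum)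

lemma herm_ip_self_real: "herm_ip x x = of_real (inner x x)"
  unfolding herm_ip_def inner_vec_def inner_complex_def
  by (simp add: complex_eq_iff Re_sum Im_sum power2_eq_square)


lemma sum_if_eq_lt:
  fixes x y :: "'a::comm_ring_1"
  assumes "j < n"
  shows "(\<Sum>k<n. if j = k then x else y) = x + of_nat (n - 1) * y"
proof -
  have "(\<Sum>k<n. if j = k then x else y) = (\<Sum>k<n. y + (if j = k then x - y else 0))"
    by (rule sum.cong) auto
  also have "\<dots> = of_nat n * y + (x - y)"
    using assms by (simp add: sum.distrib)
  also have "\<dots> = x + of_nat (n - 1) * y"
    using assms by (cases n) (auto simp: algebra_simps)
  finally show ?thesis .
qed

locale cf =
  fixes n :: nat and f :: "nat \<Rightarrow> complex^'n::finite" and \<alpha> :: complex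
  assumes inj: "inj_on f {..<n}"
  and unit: "\<And>j. j<n \<Longrightarrow> herm_ip (f j) (f j) = 1"
  and offd: "\<And>j k. j<n \<Longrightarrow> k<n \<Longrightarrow> j\<noteq>k \<Longrightarrow> herm_ip (f j) (f k) = \<alpha> \<or> herm_ip (f j) (f k) = cnj \<alpha>"
  and ima: "Im \<alpha> > 0"
  and n2: "2 \<le> n"
begin

definition S :: "nat \<Rightarrow> nat \<Rightarrow> int" where
  "S j k = (if j = k then 0 else if herm_ip (f j) (f k) = \<alpha> then 1 else -1)"

lemma cnj_ne: "cnj \<alpha> \<noteq> \<alpha>"
  using ima by (auto simp: complex_eq_iff)

lemma G: "j<n \<Longrightarrow> k<n \<Longrightarrow> herm_ip (f j) (f k) = Complex (if j = k then 1 else Re \<alpha>) (Im \<alpha> * of_int (S j k))"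
  using offd[of j k] unit[of j] cnj_ne
  by (auto simp: S_def complex_eq_iff)

lemma S_diag[simp]: "S j j = 0" by (simp add: S_def)

lemma S_pm: "j \<noteq> k \<Longrightarrow> S j k = 1 \<or> S j k = -1" by (simp add: S_def)

lemma S_skew: "j<n \<Longrightarrow> k<n \<Longrightarrow> S k j = - S j k"
proof (cases "j = k")
  case False
  assume jk: "j<n" "k<n"
  have h: "herm_ip (f k) (f j) = cnj (herm_ip (f j) (f k))" by (rule herm_ip_cnj)
  show ?thesis using offd[OF jk False] cnj_ne False h by (auto simp: S_def)
qed simp

lemma S_sq: "j \<noteq> k \<Longrightarrow> S j k * S j k = 1"
  using S_pm[of j k] by auto

lemma inner_f: "j<n \<Longrightarrow> k<n \<Longrightarrow> inner (f j) (f k) = (if j = k then 1 else Re \<alpha>)"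
  by (simp add: inner_herm G)

lemma a_lt1: "Re \<alpha> < 1"
proof -
  have ne: "f 0 \<noteq> f 1" using inj n2 by (auto dest: inj_onD)
  have "0 < inner (f 0 - f 1) (f 0 - f 1)" using ne by simp
  also have "inner (f 0 - f 1) (f 0 - f 1) = 2 - 2 * Re \<alpha>"
    using n2 by (simp add: inner_diff_left inner_diff_right inner_f inner_commute[of "f 1" "f 0"])
  finally show ?thesis by simp
qed

lemma gram_quad:
  assumes "m \<le> n"
  shows "inner (\<Sum>j<m. w j *\<^sub>R f j) (\<Sum>j<m. w j *\<^sub>R f j)
       = (1 - Re \<alpha>) * (\<Sum>j<m. (w j)\<^sup>2) + Re \<alpha> * (\<Sum>j<m. w j)\<^sup>2"
proof -
  have "inner (\<Sum>j<m. w j *\<^sub>R f j) (\<Sum>j<m. w j *\<^sub>R f j)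
      = (\<Sum>j<m. \<Sum>k<m. w j * (w k * (if k = j then 1 else Re \<alpha>)))"
    using assms by (simp add: inner_sum_left inner_sum_right inner_f sum_distrib_left)
  also have "\<dots> = (\<Sum>j<m. \<Sum>k<m. Re \<alpha> * (w j * w k) + (if j = k then (1 - Re \<alpha>) * (w j)\<^sup>2 else 0))"
    by (intro sum.cong refl) (auto simp: algebra_simps power2_eq_square)
  also have "\<dots> = Re \<alpha> * (\<Sum>j<m. \<Sum>k<m. w j * w k) + (\<Sum>j<m. (1 - Re \<alpha>) * (w j)\<^sup>2)"
    by (simp add: sum.distrib sum_distrib_left)
  also have "(\<Sum>j<m. \<Sum>k<m. w j * w k) = (\<Sum>j<m. w j)\<^sup>2"
    by (simp add: power2_eq_square sum_product)
  finally show ?thesis by (simp add: sum_distrib_left)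
qed

lemma indep:
  assumes m: "m \<le> n" and pos: "0 < 1 - Re \<alpha> + m * Re \<alpha>"
  shows "independent (f ` {..<m})"
proof
  assume "dependent (f ` {..<m})"
  then obtain u where u: "\<exists>v\<in>f ` {..<m}. u v \<noteq> 0" "(\<Sum>v\<in>f ` {..<m}. u v *\<^sub>R v) = 0"
    by (auto simp: dependent_finite)
  have injm: "inj_on f {..<m}" using inj m by (auto intro: inj_on_subset)
  define w where "w j = u (f j)" for j
  have z: "(\<Sum>j<m. w j *\<^sub>R f j) = 0"
    using u(2) by (simp add: sum.reindex[OF injm] w_def)
  obtain j0 where j0: "j0 < m" "w j0 \<noteq> 0" using u(1) by (auto simp: w_def)
  have sq: "0 < (\<Sum>j<m. (w j)\<^sup>2)"
  proof -
    have "(w j0)\<^sup>2 \<le> (\<Sum>j<m. (w j)\<^sup>2)"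
      using j0 by (intro member_le_sum) auto
    moreover have "0 < (w j0)\<^sup>2" using j0 by simp
    ultimately show ?thesis by linarith
  qed
  have cs: "(\<Sum>j<m. w j)\<^sup>2 \<le> (\<Sum>j<m. (w j)\<^sup>2) * m"
    using sum_squared_le_sum_of_squares[of w "{..<m}"] by simp
  have q: "(1 - Re \<alpha>) * (\<Sum>j<m. (w j)\<^sup>2) + Re \<alpha> * (\<Sum>j<m. w j)\<^sup>2 = 0"
    using gram_quad[OF m, of w] z by simp
  show False
  proof (cases "Re \<alpha> \<ge> 0")
    case True
    have "0 < (1 - Re \<alpha>) * (\<Sum>j<m. (w j)\<^sup>2)" using a_lt1 sq by simp
    moreover have "0 \<le> Re \<alpha> * (\<Sum>j<m. w j)\<^sup>2" using True by simp
    ultimately show False using q by linarith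
  next
    case False
    have "Re \<alpha> * ((\<Sum>j<m. (w j)\<^sup>2) * m) \<le> Re \<alpha> * (\<Sum>j<m. w j)\<^sup>2"
      using cs False by (intro mult_left_mono_neg) auto
    moreover have "0 < (1 - Re \<alpha> + m * Re \<alpha>) * (\<Sum>j<m. (w j)\<^sup>2)" using pos sq by simp
    ultimately show False using q by (simp add: algebra_simps)
  qed
qed

end

lemma even_sum_pm:
  assumes "finite K" "\<And>k. k \<in> K \<Longrightarrow> g k = 1 \<or> g k = (-1::int)"
  shows "even (sum g K - int (card K))"
proof -
  have "sum g K - int (card K) = (\<Sum>k\<in>K. g k - 1)" by (simp add: sum_subtractf)
  also have "even \<dots>"
  proof (intro dvd_sum)
    fix k assume "k \<in> K"
    then have "g k - 1 = 0 \<or> g k - 1 = -2" using assms(2) by fastforce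
    then show "even (g k - 1)"
    proof
      assume h: "g k - 1 = 0" show ?thesis by (subst h) simp
    next
      assume h: "g k - 1 = -2" show ?thesis by (subst h) simp
    qed
  qed
  finally show ?thesis .
qed

context cf begin

definition r :: "nat \<Rightarrow> int" where "r j = (\<Sum>k<n. S j k)"
definition T :: "nat \<Rightarrow> nat \<Rightarrow> int" where "T l j = (\<Sum>k<n. S l k * S k j)"

lemma r_parity: assumes "j < n" shows "even (r j - int n + 1)"
proof -
  have "r j = (\<Sum>k\<in>{..<n}-{j}. S j k)"
    unfolding r_def using assms by (subst sum.remove[of _ j]) auto
  moreover have "card ({..<n}-{j}) = n - 1" using assms by simp
  moreover have "even ((\<Sum>k\<in>{..<n}-{j}. S j k) - int (card ({..<n}-{j})))"
  proof (rule even_sum_pm)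
    fix k assume "k \<in> {..<n}-{j}"
    then show "S j k = 1 \<or> S j k = -1" using S_pm[of j k] by auto
  qed simp
  ultimately show ?thesis using assms by (simp add: of_nat_diff)
qed

lemma r_odd_if_even: "j < n \<Longrightarrow> even n \<Longrightarrow> odd (r j)"
  using r_parity[of j] by auto

lemma colsum: assumes "j < n" shows "(\<Sum>k<n. S k j) = - r j"
proof -
  have "(\<Sum>k<n. S k j) = (\<Sum>k<n. - S j k)"
    using assms by (intro sum.cong refl) (metis S_skew lessThan_iff)
  then show ?thesis unfolding r_def by (simp add: sum_negf)
qed

lemma sum_r: "(\<Sum>j<n. r j) = 0"
proof -
  have "(\<Sum>j<n. r j) = (\<Sum>k<n. \<Sum>j<n. S j k)" unfolding r_def by (rule sum.swap)
  also have "\<dots> = (\<Sum>k<n. - r k)" using colsum by simp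
  also have "\<dots> = - (\<Sum>j<n. r j)" by (simp add: sum_negf)
  finally show ?thesis by simp
qed

lemma T_diag: assumes l: "l < n" shows "T l l = - int (n - 1)"
proof -
  have "T l l = (\<Sum>k<n. if l = k then 0 else -1)"
    unfolding T_def
  proof (intro sum.cong refl)
    fix k assume k: "k \<in> {..<n}"
    show "S l k * S k l = (if l = k then 0 else -1)"
    proof (cases "l = k")
      case False
      have "S k l = - S l k" using S_skew l k by (metis lessThan_iff)
      then show ?thesis using S_sq[OF False] False by simp
    qed simp
  qed
  also have "\<dots> = - int (n - 1)" using sum_if_eq_lt[OF l, of 0 "-1::int"] by simp
  finally show ?thesis .
qed

lemma mod4: assumes l: "l < n" and j: "j < n" and lj: "l \<noteq> j"
  shows "4 dvd (int n - 2 + r l + r j - T l j)"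
proof -
  define F where "F k = (1 + S l k) * (1 + S j k)" for k
  define K where "K = {..<n} - {l, j}"
  have "4 dvd (\<Sum>k\<in>K. F k)"
  proof (rule dvd_sum)
    fix k assume "k \<in> K"
    then have "k \<noteq> l" "k \<noteq> j" by (auto simp: K_def)
    then show "4 dvd F k" using S_pm[of l k] S_pm[of j k] by (auto simp: F_def)
  qed
  moreover have "(\<Sum>k<n. F k) = (\<Sum>k\<in>K. F k) + F l + F j"
  proof -
    have "(\<Sum>k<n. F k) = F l + (\<Sum>k\<in>{..<n}-{l}. F k)"
      using l by (subst sum.remove[of _ l]) auto
    also have "(\<Sum>k\<in>{..<n}-{l}. F k) = F j + (\<Sum>k\<in>K. F k)"
      using j lj unfolding K_def by (subst sum.remove[of _ j]) (auto simp: Diff_insert2[symmetric] insert_commute)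
    finally show ?thesis by simp
  qed
  moreover have "F l + F j = 2" using S_skew[OF l j] by (simp add: F_def)
  moreover have "(\<Sum>k<n. F k) = int n + r l + r j - T l j"
  proof -
    have "(\<Sum>k<n. F k) = (\<Sum>k<n. 1 + S l k + S j k - S l k * S k j)"
    proof (intro sum.cong refl)
      fix k assume "k \<in> {..<n}"
      then have "S j k = - S k j" using S_skew j by (metis lessThan_iff)
      then show "F k = 1 + S l k + S j k - S l k * S k j" by (simp add: F_def algebra_simps)
    qed
    also have "\<dots> = int n + r l + r j - T l j"
      by (simp add: r_def T_def sum.distrib sum_subtractf)
    finally show ?thesis .
  qed
  ultimately have "(\<Sum>k\<in>K. F k) = int n - 2 + r l + r j - T l j" and "4 dvd (\<Sum>k\<in>K. F k)"
    by linarith+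
  then show ?thesis by simp
qed

end

context cf begin

definition P :: "nat \<Rightarrow> nat \<Rightarrow> real" where "P l k = (if l = k then 1 else Re \<alpha>)"

lemma G': "l<n \<Longrightarrow> k<n \<Longrightarrow> herm_ip (f l) (f k) = Complex (P l k) (Im \<alpha> * of_int (S l k))"
  using G by (simp add: P_def)

lemma sumP: "l < n \<Longrightarrow> (\<Sum>k<n. P l k) = 1 + (n - 1) * Re \<alpha>"
  unfolding P_def using sum_if_eq_lt[of l n "1::real" "Re \<alpha>"] by simp

lemma sumSP: assumes l: "l < n" and j: "j < n"
  shows "(\<Sum>k<n. of_int (S k j) * P l k) = (1 - Re \<alpha>) * of_int (S l j) - Re \<alpha> * of_int (r j)"
proof -
  have "(\<Sum>k<n. of_int (S k j) * P l k) = (\<Sum>k<n. Re \<alpha> * of_int (S k j) + (if l = k then (1 - Re \<alpha>) * of_int (S k j) else 0))"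
    by (intro sum.cong refl) (auto simp: P_def algebra_simps)
  also have "\<dots> = Re \<alpha> * of_int (\<Sum>k<n. S k j) + (1 - Re \<alpha>) * of_int (S l j)"
    using l by (simp add: sum.distrib sum_distrib_left)
  also have "\<dots> = (1 - Re \<alpha>) * of_int (S l j) - Re \<alpha> * of_int (r j)"
    using colsum[OF j] by simp
  finally show ?thesis .
qed

lemma sumSS: "(\<Sum>k<n. of_int (S k j) * of_int (S l k)) = (of_int (T l j) :: real)"
  unfolding T_def by (simp add: mult.commute)

lemma core:
  fixes \<beta> :: real
  assumes nondeg: "\<And>v. (\<forall>l<n. inner (f l) v = 0) \<Longrightarrow> v = 0"
    and hb: "\<And>j. j < n \<Longrightarrow> \<beta> * (1 - Re \<alpha> + n * Re \<alpha>) * r j = Re \<alpha> * r j"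
    and l: "l < n" and j: "j < n"
  shows "of_int (T l j) + \<beta> * r l * r j = - ((1 - Re \<alpha>) / (Im \<alpha>)\<^sup>2) * P l j"
proof -
  define a where "a = Re \<alpha>"
  define b where "b = Im \<alpha>"
  define c where "c = 1 - a"
  have b0: "b > 0" using ima by (simp add: b_def)
  have c0: "c > 0" using a_lt1 by (simp add: c_def a_def)
  define s where "s = (\<Sum>k<n. f k)"
  define z where "z j = \<i> *s f j + complex_of_real (b/c) *s ((\<Sum>k<n. complex_of_int (S k j) *s f k) + complex_of_real (\<beta> * r j) *s s)" for j
  have h: "herm_ip (f l') (z j) = \<i> * herm_ip (f l') (f j) + complex_of_real (b/c) *
      ((\<Sum>k<n. complex_of_int (S k j) * herm_ip (f l') (f k)) + complex_of_real (\<beta> * r j) * (\<Sum>k<n. herm_ip (f l') (f k)))"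
    for l'
    by (simp add: z_def s_def herm_ip_add_right herm_ip_scale_right herm_ip_sum_right distrib_left add_divide_distrib)
  have ReIm: "herm_ip (f l') (z j) = Complex
        (- b * S l' j + (b/c) * ((\<Sum>k<n. of_int (S k j) * P l' k) + \<beta> * r j * (\<Sum>k<n. P l' k)))
        (P l' j + (b/c) * ((\<Sum>k<n. of_int (S k j) * (b * of_int (S l' k))) + \<beta> * r j * (\<Sum>k<n. b * of_int (S l' k))))"
    if l': "l' < n" for l'
  proof -
    have e1: "(\<Sum>k<n. complex_of_int (S k j) * herm_ip (f l') (f k)) = (\<Sum>k<n. Complex (of_int (S k j) * P l' k) (of_int (S k j) * (b * of_int (S l' k))))"
      using l' by (intro sum.cong refl) (simp add: G' b_def complex_eq_iff)
    have e2: "(\<Sum>k<n. herm_ip (f l') (f k)) = (\<Sum>k<n. Complex (P l' k) (b * of_int (S l' k)))"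
      using l' by (intro sum.cong refl) (simp add: G' b_def)
    show ?thesis
      unfolding h e1 e2 using l' j
      by (simp add: G' complex_eq_iff Re_sum Im_sum b_def algebra_simps)
  qed
  have Re0: "inner (f l') (z j) = 0" if l': "l' < n" for l'
  proof -
    have "inner (f l') (z j) = - b * S l' j + (b/c) * (((1 - a) * S l' j - a * r j) + \<beta> * r j * (1 + (n - 1) * a))"
      using l' j by (simp add: inner_herm ReIm sumSP sumP a_def)
    also have "(1 + (n - 1) * a) = 1 - a + n * a" using n2 by (simp add: of_nat_diff algebra_simps)
    also have "- b * S l' j + (b/c) * (((1 - a) * S l' j - a * r j) + \<beta> * r j * (1 - a + n * a)) = 0"
      using hb[OF j] c0 by (simp add: c_def a_def field_simps)
    finally show ?thesis .
  qed
  have "z j = 0" using nondeg Re0 by blast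
  then have "Im (herm_ip (f l) (z j)) = 0" by simp
  then have "P l j + (b/c) * (b * of_int (T l j) + \<beta> * r j * (b * r l)) = 0"
    using l by (simp add: ReIm sumSS sum_distrib_left[symmetric] mult.left_commute[of _ b] r_def)
  then show ?thesis using b0 c0 by (simp add: c_def a_def b_def field_simps power2_eq_square)
qed

end

context cf begin

lemma normsum: "inner (\<Sum>k<n. f k) (\<Sum>k<n. f k) = n * (1 - Re \<alpha> + n * Re \<alpha>)"
  using gram_quad[of n "\<lambda>_. 1"] by (simp add: power2_eq_square algebra_simps)

lemma A_nonneg: "0 \<le> 1 - Re \<alpha> + n * Re \<alpha>"
proof -
  have "0 \<le> n * (1 - Re \<alpha> + n * Re \<alpha>)" using normsum[symmetric] by simp
  then show ?thesis using n2 by (simp add: zero_le_mult_iff)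
qed

lemma A_zero_r: assumes A: "1 - Re \<alpha> + n * Re \<alpha> = 0" and j: "j < n" shows "r j = 0"
proof -
  have "(\<Sum>k<n. f k) = 0" using normsum A by simp
  then have "herm_ip (\<Sum>k<n. f k) (f j) = 0" by (simp add: herm_ip_def)
  then have "Im (\<Sum>k<n. herm_ip (f k) (f j)) = 0" by (simp add: herm_ip_sum_left)
  moreover have "Im (\<Sum>k<n. herm_ip (f k) (f j)) = Im \<alpha> * of_int (\<Sum>k<n. S k j)"
    using j by (simp add: Im_sum G sum_distrib_left)
  ultimately have "real_of_int (\<Sum>k<n. S k j) = 0" using ima by simp
  then have "(\<Sum>k<n. S k j) = 0" by linarith
  then show ?thesis using colsum[OF j] by simp
qed

lemma A_zero_odd: assumes A: "1 - Re \<alpha> + n * Re \<alpha> = 0" shows "odd n"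
proof -
  have "even (r 0 - int n + 1)" using r_parity n2 by simp
  then have "even (1 - int n)" using A_zero_r[OF A, of 0] n2 by simp
  then show ?thesis by presburger
qed

lemma nondeg_of_indep:
  assumes m: "m \<le> n" and ind: "independent (f ` {..<m})" and md: "m = DIM(complex^'n)"
  shows "\<And>v. (\<forall>l<n. inner (f l) v = 0) \<Longrightarrow> v = 0"
proof -
  fix v assume h: "\<forall>l<n. inner (f l) v = 0"
  have injm: "inj_on f {..<m}" using inj m by (auto intro: inj_on_subset)
  have "card (f ` {..<m}) = dim (UNIV :: (complex^'n) set)"
  proof -
    have "card (f ` {..<m}) = m" using card_image[OF injm] by simp
    then show ?thesis using md by (simp add: dim_UNIV)
  qed
  then have "UNIV \<subseteq> span (f ` {..<m})"
    using card_eq_dim[of "f ` {..<m}" UNIV] ind by simp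
  then have "v \<in> span (f ` {..<m})" by auto
  moreover have "\<And>y. y \<in> f ` {..<m} \<Longrightarrow> orthogonal v y"
    using h m by (auto simp: orthogonal_def inner_commute)
  ultimately have "orthogonal v v" by (rule orthogonal_to_span)
  then show "v = 0" by (simp add: orthogonal_def)
qed

lemma DIM_eq: "DIM(complex^'n) = 2 * CARD('n)" by simp

lemma part1: assumes ev: "even CARD('n)" shows "n \<le> 2 * CARD('n)"
proof (cases "0 < 1 - Re \<alpha> + n * Re \<alpha>")
  case True
  have "independent (f ` {..<n})" using indep[OF le_refl True] .
  then have "card (f ` {..<n}) \<le> DIM(complex^'n)" using independent_bound by blast
  then show ?thesis using card_image[OF inj] by simp
next
  case False
  then have A: "1 - Re \<alpha> + n * Re \<alpha> = 0" using A_nonneg by linarith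
  have r0: "\<And>j. j < n \<Longrightarrow> r j = 0" using A_zero_r[OF A] .
  have an: "Re \<alpha> < 0"
  proof -
    have "1 - Re \<alpha> > 0" using a_lt1 by simp
    then have "n * Re \<alpha> < 0" using A by linarith
    then show ?thesis by (simp add: mult_less_0_iff)
  qed
  have pos: "0 < 1 - Re \<alpha> + real (n - 1) * Re \<alpha>"
    using A n2 an by (simp add: of_nat_diff algebra_simps)
  have ind: "independent (f ` {..<n-1})" using indep[OF _ pos] by simp
  have injm: "inj_on f {..<n-1}" using inj by (auto intro: inj_on_subset)
  have le: "n - 1 \<le> 2 * CARD('n)"
    using independent_bound[OF ind] card_image[OF injm] by simp
  show ?thesis
  proof (rule ccontr)
    assume "\<not> n \<le> 2 * CARD('n)"
    then have nd: "n - 1 = DIM(complex^'n)" using le by simp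
    have nondeg: "\<And>v. (\<forall>l<n. inner (f l) v = 0) \<Longrightarrow> v = 0"
      using nondeg_of_indep[OF _ ind nd] by simp
    have E: "of_int (T l j) + 0 * r l * r j = - ((1 - Re \<alpha>) / (Im \<alpha>)\<^sup>2) * P l j"
      if "l < n" "j < n" for l j
      using core[OF nondeg _ that, of 0] r0 by simp
    have "of_int (T 0 0) = - ((1 - Re \<alpha>) / (Im \<alpha>)\<^sup>2)" using E[of 0 0] n2 by (simp add: P_def)
    then have g: "(1 - Re \<alpha>) / (Im \<alpha>)\<^sup>2 = real (n - 1)" using T_diag[of 0] n2 by simp
    have "of_int (T 0 1) = - ((1 - Re \<alpha>) / (Im \<alpha>)\<^sup>2) * Re \<alpha>" using E[of 0 1] n2 by (simp add: P_def)
    also have "\<dots> = - (real (n - 1) * Re \<alpha>)" using g by simp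
    also have "real (n - 1) * Re \<alpha> = -1" using A n2 by (simp add: of_nat_diff algebra_simps)
    finally have "T 0 1 = 1" by simp
    then have "4 dvd (int n - 3)" using mod4[of 0 1] r0[of 0] r0[of 1] n2 by simp
    moreover have "n = 2 * CARD('n) + 1" using nd n2 by simp
    ultimately have "4 dvd (2 * int CARD('n) - 2)" by simp
    then show False using ev by presburger
  qed
qed

end

context cf begin

lemma part2:
  assumes ev: "even CARD('n)" and nd: "n = 2 * CARD('n)"
  shows "\<And>l j. l < n \<Longrightarrow> j < n \<Longrightarrow> l \<noteq> j \<Longrightarrow> T l j = 0"
proof -
  define a where "a = Re \<alpha>"
  define A where "A = 1 - a + n * a"
  define \<gamma> where "\<gamma> = (1 - a) / (Im \<alpha>)\<^sup>2"
  define \<beta> where "\<beta> = a / A"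
  have evn: "even n" using nd by simp
  have Apos: "A > 0"
  proof -
    have "A \<noteq> 0" using A_zero_odd evn by (auto simp: A_def a_def)
    then show ?thesis using A_nonneg by (simp add: A_def a_def)
  qed
  have ind: "independent (f ` {..<n})" using indep[OF le_refl] Apos by (simp add: A_def a_def)
  have nondeg: "\<And>v. (\<forall>l<n. inner (f l) v = 0) \<Longrightarrow> v = 0"
    using nondeg_of_indep[OF le_refl ind] nd by simp
  have hb: "\<beta> * (1 - Re \<alpha> + n * Re \<alpha>) * r j = Re \<alpha> * r j" for j
    using Apos by (simp add: \<beta>_def A_def a_def)
  have E: "of_int (T l j) + \<beta> * r l * r j = - \<gamma> * P l j" if "l < n" "j < n" for l j
    using core[OF nondeg hb that] by (simp add: \<gamma>_def a_def)
  have rodd: "odd (r l)" if "l < n" for l using r_odd_if_even[OF that evn] .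
  have rnz: "r l \<noteq> 0" if "l < n" for l using rodd[OF that] by auto
  have sr: "(\<Sum>j<n. r j) = 0" by (rule sum_r)
  have srR: "(\<Sum>j<n. real_of_int (r j)) = 0" using sr by (metis of_int_0 of_int_sum)
  define Sr where "Sr k = (\<Sum>m<n. of_int (S k m) * of_int (r m) :: real)" for k
  have sumT: "(\<Sum>j<n. real_of_int (T l j)) = Sr l" for l
  proof -
    have "(\<Sum>j<n. real_of_int (T l j)) = (\<Sum>j<n. \<Sum>k<n. of_int (S l k) * of_int (S k j))"
      by (simp add: T_def)
    also have "\<dots> = (\<Sum>k<n. \<Sum>j<n. of_int (S l k) * of_int (S k j))" by (rule sum.swap)
    also have "\<dots> = Sr l" by (simp add: Sr_def r_def sum_distrib_left)
    finally show ?thesis .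
  qed
  have Srl: "Sr l = - \<gamma> * A" if l: "l < n" for l
  proof -
    have "(\<Sum>j<n. of_int (T l j) + \<beta> * r l * r j) = (\<Sum>j<n. - \<gamma> * P l j)"
      using E l by (intro sum.cong refl) auto
    then have "Sr l + \<beta> * r l * (\<Sum>j<n. real_of_int (r j)) = - \<gamma> * (\<Sum>j<n. P l j)"
      by (simp add: sum.distrib sumT sum_distrib_left)
    then show ?thesis using srR sumP[OF l] n2 by (simp add: A_def a_def of_nat_diff algebra_simps)
  qed
  define R2 where "R2 = (\<Sum>j<n. real_of_int (r j) * r j)"
  have key: "\<beta> * R2 = \<gamma> * n * a"
  proof -
    have l: "0 < n" using n2 by simp
    have t1: "(\<Sum>j<n. real_of_int (T 0 j) * r j) = - \<gamma> * A * r 0"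
    proof -
      have "(\<Sum>j<n. real_of_int (T 0 j) * r j) = (\<Sum>j<n. \<Sum>k<n. real_of_int (S 0 k) * (real_of_int (S k j) * r j))"
        by (simp add: T_def sum_distrib_right mult.assoc)
      also have "\<dots> = (\<Sum>k<n. \<Sum>j<n. real_of_int (S 0 k) * (real_of_int (S k j) * r j))" by (rule sum.swap)
      also have "\<dots> = (\<Sum>k<n. real_of_int (S 0 k) * Sr k)" by (simp add: Sr_def sum_distrib_left)
      also have "\<dots> = (\<Sum>k<n. real_of_int (S 0 k) * (- \<gamma> * A))" using Srl by simp
      also have "\<dots> = - \<gamma> * A * (\<Sum>k<n. real_of_int (S 0 k))"
        by (simp add: sum_distrib_left algebra_simps)
      also have "\<dots> = - \<gamma> * A * r 0" by (simp add: r_def)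
      finally show ?thesis .
    qed
    have t2: "(\<Sum>j<n. P 0 j * r j) = (1 - a) * r 0"
    proof -
      have "(\<Sum>j<n. P 0 j * r j) = (\<Sum>j<n. a * r j + (if 0 = j then (1 - a) * r j else 0))"
        by (intro sum.cong refl) (auto simp: P_def a_def algebra_simps)
      also have "\<dots> = a * (\<Sum>j<n. real_of_int (r j)) + (1 - a) * r 0"
        using l by (simp add: sum.distrib sum_distrib_left)
      finally show ?thesis using srR by simp
    qed
    have "(\<Sum>j<n. (of_int (T 0 j) + \<beta> * r 0 * r j) * r j) = (\<Sum>j<n. (- \<gamma> * P 0 j) * r j)"
      using E l by (intro sum.cong refl) auto
    then have "(\<Sum>j<n. real_of_int (T 0 j) * r j) + \<beta> * r 0 * R2 = - \<gamma> * (\<Sum>j<n. P 0 j * r j)"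
      by (simp add: R2_def sum.distrib distrib_right sum_distrib_left mult.assoc)
    then have "- \<gamma> * A * r 0 + \<beta> * r 0 * R2 = - \<gamma> * ((1 - a) * r 0)" using t1 t2 by simp
    then have "r 0 * (\<beta> * R2 - \<gamma> * n * a) = 0" by (simp add: A_def algebra_simps)
    then show ?thesis using rnz[OF l] by simp
  qed
  have a0: "a = 0"
  proof (rule ccontr)
    assume an: "a \<noteq> 0"
    then have bn: "\<beta> \<noteq> 0" using Apos by (simp add: \<beta>_def)
    have diag: "\<beta> * (r l * r l) = n - 1 - \<gamma>" if "l < n" for l
      using E[OF that that] T_diag[OF that] n2 by (simp add: P_def of_nat_diff algebra_simps)
    have sq: "real_of_int (r l) * real_of_int (r l) = real_of_int (r 0) * real_of_int (r 0)" if "l < n" for l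
    proof -
      have "\<beta> * (real_of_int (r l) * r l) = \<beta> * (r 0 * r 0)" using diag[OF that] diag[of 0] n2 by simp
      then show ?thesis using bn by simp
    qed
    have "R2 = (\<Sum>j<n. real_of_int (r 0) * r 0)" unfolding R2_def
      by (rule sum.cong[OF refl], rule sq, simp)
    then have "R2 = n * (r 0 * r 0)" by simp
    then have br: "\<beta> * (r 0 * r 0) = \<gamma> * a" using key n2 by (simp add: algebra_simps)
    have "\<exists>j<n. r j \<noteq> r 0"
    proof (rule ccontr)
      assume "\<not> (\<exists>j<n. r j \<noteq> r 0)"
      then have all: "\<forall>j<n. r j = r 0" by blast
      have "(\<Sum>j<n. r j) = (\<Sum>j<n. r 0)" by (rule sum.cong[OF refl]) (use all in blast)
      then have "(\<Sum>j<n. r j) = int n * r 0" by simp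
      then show False using sr rnz[of 0] n2 by simp
    qed
    then obtain j where j: "j < n" "r j \<noteq> r 0" by blast
    have "real_of_int (r j) * real_of_int (r j) = real_of_int (r 0) * real_of_int (r 0)" using j by (intro sq) simp
    then have "r j * r j = r 0 * r 0" by (simp only: of_int_mult[symmetric] of_int_eq_iff)
    then have rj: "r j = - r 0" using j(2) by (simp add: square_eq_iff)
    have j0: "j \<noteq> 0" using j(2) by (metis)
    have "of_int (T 0 j) + \<beta> * r 0 * r j = - \<gamma> * a" using E[of 0 j] j j0 n2 by (simp add: P_def a_def)
    then have "real_of_int (T 0 j) = 0" using br rj by (simp add: algebra_simps)
    then have "T 0 j = 0" by simp
    then have "4 dvd (int n - 2)" using mod4[of 0 j] j j0 n2 rj by simp
    then have "4 dvd (2 * int CARD('n) - 2)" using nd by simp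
    then show False using ev by presburger
  qed
  fix l j assume lj: "l < n" "j < n" "l \<noteq> j"
  have "\<beta> = 0" using a0 by (simp add: \<beta>_def)
  then have "of_int (T l j) = - \<gamma> * P l j" using E[OF lj(1,2)] by simp
  then show "T l j = 0" using lj a0 by (simp add: P_def a_def)
qed

end

lemma herm_ip_zero_left[simp]: "herm_ip 0 y = 0"
  unfolding herm_ip_def by simp

lemma sum_closed_P:
  assumes P0: "0 \<in> Pp" and Padd: "\<And>x y. x \<in> Pp \<Longrightarrow> y \<in> Pp \<Longrightarrow> x + y \<in> Pp"
  shows "finite A \<Longrightarrow> (\<And>t. t \<in> A \<Longrightarrow> g t \<in> Pp) \<Longrightarrow> sum g A \<in> Pp"
  by (induction A rule: finite_induct) (auto intro: P0 Padd)

lemma ortho_expand: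
  fixes u :: "nat \<Rightarrow> complex^'m::finite"
  assumes on: "\<And>t s. t < r \<Longrightarrow> s < r \<Longrightarrow> herm_ip (u t) (u s) = (if t = s then 1 else 0)"
  shows "herm_ip (\<Sum>t<r. a t *s u t) (\<Sum>s<r. b s *s u s) = (\<Sum>t<r. cnj (a t) * b t)"
proof -
  have "herm_ip (\<Sum>t<r. a t *s u t) (\<Sum>s<r. b s *s u s)
      = (\<Sum>s<r. \<Sum>t<r. b s * (cnj (a t) * herm_ip (u t) (u s)))"
    by (simp add: herm_ip_sum_left herm_ip_sum_right herm_ip_scale_left herm_ip_scale_right sum_distrib_left)
  also have "\<dots> = (\<Sum>t<r. \<Sum>s<r. b s * (cnj (a t) * herm_ip (u t) (u s)))" by (rule sum.swap)
  also have "\<dots> = (\<Sum>t<r. \<Sum>s<r. if t = s then cnj (a t) * b t else 0)"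
    using on by (intro sum.cong refl) (auto simp: mult.commute)
  also have "\<dots> = (\<Sum>t<r. cnj (a t) * b t)" by simp
  finally show ?thesis .
qed

lemma GS:
  fixes v :: "nat \<Rightarrow> complex^'m::finite"
  assumes P0: "0 \<in> Pp" and Padd: "\<And>x y. x \<in> Pp \<Longrightarrow> y \<in> Pp \<Longrightarrow> x + y \<in> Pp"
    and Pscale: "\<And>c x. x \<in> Pp \<Longrightarrow> c *s x \<in> Pp"
  shows "(\<forall>j<N. v j \<in> Pp) \<Longrightarrow> \<exists>r e c. r \<le> N \<and>
     (\<forall>t<r. \<forall>s<r. herm_ip (e t) (e s) = (if t = s then 1 else 0)) \<and>
     (\<forall>t<r. e t \<in> Pp) \<and> (\<forall>j<N. v j = (\<Sum>t<r. c t j *s e t))"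
proof (induction N)
  case 0
  show ?case by (rule exI[of _ 0], rule exI[of _ "\<lambda>_. 0"]) auto
next
  case (Suc N)
  then obtain r e c where r: "r \<le> N"
    and on: "\<forall>t<r. \<forall>s<r. herm_ip (e t) (e s) = (if t = s then 1 else 0)"
    and eP: "\<forall>t<r. e t \<in> Pp" and rep: "\<forall>j<N. v j = (\<Sum>t<r. c t j *s e t)"
    by auto
  define h where "h t = herm_ip (e t) (v N)" for t
  define u where "u = v N - (\<Sum>t<r. h t *s e t)"
  have orth: "herm_ip (e t) u = 0" if t: "t < r" for t
  proof -
    have "herm_ip (e t) (\<Sum>s<r. h s *s e s) = (\<Sum>s<r. h s * herm_ip (e t) (e s))"
      by (simp add: herm_ip_sum_right herm_ip_scale_right)
    also have "\<dots> = (\<Sum>s<r. if t = s then h s else 0)"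
      using on t by (intro sum.cong refl) auto
    also have "\<dots> = h t" using t by simp
    finally show ?thesis by (simp add: u_def herm_ip_diff_right h_def)
  qed
  have vNP: "v N \<in> Pp" using Suc.prems by simp
  have sP: "(\<Sum>t<r. h t *s e t) \<in> Pp"
    using eP by (intro sum_closed_P[OF P0 Padd]) (auto intro: Pscale)
  have uP: "u \<in> Pp"
  proof -
    have "u = v N + (-1) *s (\<Sum>t<r. h t *s e t)" by (simp add: u_def vector_sneg_minus1[symmetric])
    moreover have "(-1) *s (\<Sum>t<r. h t *s e t) \<in> Pp" using sP by (rule Pscale)
    ultimately show ?thesis using vNP Padd by metis
  qed
  show ?case
  proof (cases "u = 0")
    case True
    define c' where "c' t j = (if j = N then h t else c t j)" for t j
    show ?thesis
    proof (intro exI conjI)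
      show "r \<le> Suc N" using r by simp
      show "\<forall>j<Suc N. v j = (\<Sum>t<r. c' t j *s e t)"
      proof (intro allI impI)
        fix j assume "j < Suc N"
        then consider "j < N" | "j = N" by linarith
        then show "v j = (\<Sum>t<r. c' t j *s e t)"
        proof cases
          case 1 then show ?thesis using rep by (simp add: c'_def)
        next
          case 2 then show ?thesis using True by (simp add: c'_def u_def)
        qed
      qed
    qed (use on eP in auto)
  next
    case False
    define nu where "nu = sqrt (inner u u)"
    have nu0: "nu > 0" using False by (simp add: nu_def)
    have uu: "herm_ip u u = complex_of_real (nu * nu)"
      using herm_ip_self_real[of u] by (simp add: nu_def)
    define e' where "e' = e(r := complex_of_real (1 / nu) *s u)"
    define c' where "c' t j = (if j = N then (if t = r then complex_of_real nu else h t)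
                               else (if t = r then 0 else c t j))" for t j
    have e'lt: "t < r \<Longrightarrow> e' t = e t" for t by (simp add: e'_def)
    have e'r: "e' r = complex_of_real (1 / nu) *s u" by (simp add: e'_def)
    show ?thesis
    proof (intro exI conjI)
      show "Suc r \<le> Suc N" using r by simp
      show "\<forall>t<Suc r. \<forall>s<Suc r. herm_ip (e' t) (e' s) = (if t = s then 1 else 0)"
      proof (intro allI impI)
        fix t s assume t: "t < Suc r" and s: "s < Suc r"
        show "herm_ip (e' t) (e' s) = (if t = s then 1 else 0)"
        proof (cases "t < r")
          case tl: True
          show ?thesis
          proof (cases "s < r")
            case True then show ?thesis using tl on by (simp add: e'lt)
          next
            case False then have "s = r" using s by simp
            then show ?thesis using tl orth[OF tl] by (simp add: e'lt e'r herm_ip_scale_right)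
          qed
        next
          case False then have tr: "t = r" using t by simp
          show ?thesis
          proof (cases "s < r")
            case True
            have "herm_ip (e' t) (e' s) = cnj (herm_ip (e' s) (e' t))" by (rule herm_ip_cnj)
            then show ?thesis using True tr orth[OF True] by (simp add: e'lt e'r herm_ip_scale_right)
          next
            case False then have "s = r" using s by simp
            then show ?thesis using tr nu0 uu
              by (simp add: e'r herm_ip_scale_right herm_ip_scale_left field_simps)
          qed
        qed
      qed
      show "\<forall>t<Suc r. e' t \<in> Pp"
        using eP uP Pscale by (auto simp: e'_def less_Suc_eq)
      show "\<forall>j<Suc N. v j = (\<Sum>t<Suc r. c' t j *s e' t)"
      proof (intro allI impI)
        fix j assume "j < Suc N"
        then consider "j < N" | "j = N" by linarith
        then show "v j = (\<Sum>t<Suc r. c' t j *s e' t)"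
        proof cases
          case 1
          have "(\<Sum>t<Suc r. c' t j *s e' t) = (\<Sum>t<r. c t j *s e t)"
            using 1 by (simp add: c'_def e'lt)
          then show ?thesis using rep 1 by simp
        next
          case 2
          have "(\<Sum>t<Suc r. c' t j *s e' t) = (\<Sum>t<r. h t *s e t) + complex_of_real nu *s (complex_of_real (1 / nu) *s u)"
            using 2 by (simp add: c'_def e'lt e'r)
          also have "\<dots> = (\<Sum>t<r. h t *s e t) + u" using nu0 by (simp add: vector_smult_assoc)
          also have "\<dots> = v N" by (simp add: u_def)
          finally show ?thesis using 2 by simp
        qed
      qed
    qed
  qed
qed


definition cv :: "complex^'m::finite \<Rightarrow> complex^'m" where "cv y = (\<chi> p. cnj (y $ p))"

definition Lmap :: "('m::finite \<Rightarrow> 'm \<Rightarrow> real) \<Rightarrow> complex^'m \<Rightarrow> complex^'m" where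
  "Lmap Mx y = (\<chi> p. \<Sum>q\<in>UNIV. complex_of_real (Mx p q) * y $ q)"

lemma cv_cv[simp]: "cv (cv y) = y" by (simp add: cv_def vec_eq_iff)

lemma herm_cv: "herm_ip (cv x) (cv y) = cnj (herm_ip x y)"
  by (simp add: herm_ip_def cv_def)

lemma cv_scale: "cv (a *s y) = cnj a *s cv y"
  by (simp add: cv_def vec_eq_iff)

lemma Lmap_zero: "Lmap Mx 0 = 0" by (simp add: Lmap_def vec_eq_iff)

lemma Lmap_add: "Lmap Mx (x + y) = Lmap Mx x + Lmap Mx y"
  by (simp add: Lmap_def vec_eq_iff distrib_left sum.distrib)

lemma Lmap_scale: "Lmap Mx (a *s y) = a *s Lmap Mx y"
  by (simp add: Lmap_def vec_eq_iff sum_distrib_left algebra_simps)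

lemma Lmap_cv: "Lmap Mx (cv y) = cv (Lmap Mx y)"
  by (simp add: Lmap_def cv_def vec_eq_iff)

lemma Lmap_skew:
  assumes sk: "\<And>p q. Mx q p = - Mx p q"
  shows "herm_ip u (Lmap Mx w) = - herm_ip (Lmap Mx u) w"
proof -
  have "herm_ip u (Lmap Mx w) = (\<Sum>p\<in>UNIV. \<Sum>q\<in>UNIV. complex_of_real (Mx p q) * (cnj (u $ p) * w $ q))"
    by (simp add: herm_ip_def Lmap_def sum_distrib_left algebra_simps)
  also have "\<dots> = (\<Sum>q\<in>UNIV. \<Sum>p\<in>UNIV. complex_of_real (Mx p q) * (cnj (u $ p) * w $ q))"
    by (rule sum.swap)
  also have "\<dots> = - (\<Sum>q\<in>UNIV. \<Sum>p\<in>UNIV. complex_of_real (Mx q p) * (cnj (u $ p) * w $ q))"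
  proof -
    have m: "complex_of_real (Mx p q) = - complex_of_real (Mx q p)" for p q
      using sk[of q p] by simp
    show ?thesis by (subst m) (simp add: sum_negf)
  qed
  also have "(\<Sum>q\<in>UNIV. \<Sum>p\<in>UNIV. complex_of_real (Mx q p) * (cnj (u $ p) * w $ q)) = herm_ip (Lmap Mx u) w"
    by (simp add: herm_ip_def Lmap_def sum_distrib_right sum_distrib_left cnj_sum algebra_simps)
  finally show ?thesis .
qed

lemma eig_orth:
  assumes sk: "\<And>p q. Mx q p = - Mx p q" and mu: "\<mu> \<noteq> 0"
    and e: "Lmap Mx e = \<mu> *s e" and e': "Lmap Mx e' = \<mu> *s e'"
  shows "herm_ip (cv e) e' = 0"
proof -
  have "herm_ip (cv e) (Lmap Mx e') = \<mu> * herm_ip (cv e) e'" by (simp add: e' herm_ip_scale_right)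
  moreover have "herm_ip (Lmap Mx (cv e)) e' = \<mu> * herm_ip (cv e) e'"
    by (simp add: Lmap_cv e cv_scale herm_ip_scale_left)
  moreover have "herm_ip (cv e) (Lmap Mx e') = - herm_ip (Lmap Mx (cv e)) e'" by (rule Lmap_skew[OF sk])
  ultimately have "\<mu> * herm_ip (cv e) e' = - (\<mu> * herm_ip (cv e) e')" by simp
  then show ?thesis using mu by simp
qed

lemma herm_axis: "herm_ip (axis i (1::complex)) (axis j 1) = (if i = j then 1 else 0)"
proof -
  have "herm_ip (axis i (1::complex)) (axis j 1) = (\<Sum>p\<in>UNIV. if p = i then (if i = j then 1 else 0) else 0)"
    unfolding herm_ip_def axis_def by (intro sum.cong) auto
  then show ?thesis by simp
qed

lemma four_bound:
  fixes e :: "nat \<Rightarrow> complex^'m::finite"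
  assumes on: "\<And>t s. t < r \<Longrightarrow> s < r \<Longrightarrow> herm_ip (e t) (e s) = (if t = s then 1 else 0)"
    and co: "\<And>t s. t < r \<Longrightarrow> s < r \<Longrightarrow> herm_ip (cv (e t)) (e s) = 0"
  shows "r * 4 \<le> DIM(complex^'m)"
proof -
  define g where "g = (\<lambda>(t::nat, k::nat). if k = 0 then e t else if k = 1 then \<i> *s e t
                      else if k = 2 then cv (e t) else \<i> *s cv (e t))"
  define I where "I = {..<r} \<times> {..<(4::nat)}"
  have co': "herm_ip (e t) (cv (e s)) = 0" if "t < r" "s < r" for t s
    using co[OF that(2,1)] herm_ip_cnj[of "e t" "cv (e s)"] by simp
  have cc: "herm_ip (cv (e t)) (cv (e s)) = (if t = s then 1 else 0)" if "t < r" "s < r" for t s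
    using on[OF that] by (simp add: herm_cv)
  have ip: "inner (g p) (g q) = (if p = q then 1 else 0)" if p: "p \<in> I" and q: "q \<in> I" for p q
  proof -
    obtain t k where pk: "p = (t, k)" "t < r" "k < 4" using p by (auto simp: I_def)
    obtain s k' where qk: "q = (s, k')" "s < r" "k' < 4" using q by (auto simp: I_def)
    have k4: "k = 0 \<or> k = 1 \<or> k = 2 \<or> k = 3" using pk by auto
    have k4': "k' = 0 \<or> k' = 1 \<or> k' = 2 \<or> k' = 3" using qk by auto
    note facts = on[OF pk(2) qk(2)] co[OF pk(2) qk(2)] co'[OF pk(2) qk(2)] cc[OF pk(2) qk(2)]
    show ?thesis using k4 k4' unfolding pk qk
      apply (elim disjE)
      apply (simp_all add: facts g_def inner_herm herm_ip_scale_left herm_ip_scale_right)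
      done
  qed
  have injg: "inj_on g I"
  proof
    fix p q assume p: "p \<in> I" and q: "q \<in> I" and eq: "g p = g q"
    have "inner (g p) (g q) = 1" using ip[OF p p] eq by simp
    then show "p = q" using ip[OF p q] by (auto split: if_splits)
  qed
  have "pairwise orthogonal (g ` I)"
    unfolding pairwise_def orthogonal_def
  proof (intro ballI impI)
    fix x y assume x: "x \<in> g ` I" and y: "y \<in> g ` I" and xy: "x \<noteq> y"
    then obtain p q where pq: "p \<in> I" "q \<in> I" "x = g p" "y = g q" by blast
    then have "p \<noteq> q" using xy by blast
    then show "inner x y = 0" using ip[OF pq(1,2)] pq(3,4) by simp
  qed
  moreover have "0 \<notin> g ` I"
  proof
    assume "0 \<in> g ` I"
    then obtain p where "p \<in> I" "g p = 0" by auto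
    then show False using ip[of p p] by simp
  qed
  ultimately have "independent (g ` I)" by (rule pairwise_orthogonal_independent)
  then have "card (g ` I) \<le> DIM(complex^'m)" using independent_bound by blast
  moreover have "card (g ` I) = r * 4" using card_image[OF injg] by (simp add: I_def card_cartesian_product)
  ultimately show ?thesis by simp
qed


lemma construct:
  fixes S :: "nat \<Rightarrow> nat \<Rightarrow> int"
  assumes nd: "n = 2 * CARD('n::finite)"
  and Sd: "\<And>j. S j j = 0"
  and Sskew: "\<And>j k. j<n \<Longrightarrow> k<n \<Longrightarrow> S k j = - S j k"
  and Sorth: "\<And>i j. i<n \<Longrightarrow> j<n \<Longrightarrow> (\<Sum>k<n. S i k * S j k) = (if i = j then int n - 1 else 0)"
  shows "\<exists>x :: nat \<Rightarrow> complex^'n. \<forall>j<n. \<forall>k<n. herm_ip (x j) (x k) =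
     (if j = k then 1 else \<i> * complex_of_real (1 / sqrt (real n - 1)) * of_int (S j k))"
proof -
  have n2: "n \<ge> 2" using nd finite_UNIV_card_ge_0[where 'a='n] by simp
  define b where "b = 1 / sqrt (real n - 1)"
  have b0: "b > 0" using n2 by (simp add: b_def)
  have hb: "b * b * (real n - 1) = 1" using n2 by (simp add: b_def)
  obtain \<sigma> :: "'n \<times> bool \<Rightarrow> nat" where \<sigma>: "bij_betw \<sigma> UNIV {..<n}"
  proof -
    obtain h :: "'n \<times> bool \<Rightarrow> nat" where "bij_betw h UNIV {0..<card (UNIV :: ('n \<times> bool) set)}"
      using ex_bij_betw_finite_nat[of "UNIV :: ('n \<times> bool) set"] by auto
    moreover have "card (UNIV :: ('n \<times> bool) set) = n" using nd by simp
    ultimately show ?thesis using that by (simp add: atLeast0LessThan)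
  qed
  have \<sigma>lt: "\<sigma> p < n" for p using \<sigma> by (auto simp: bij_betw_def)
  have reidx: "(\<Sum>p\<in>UNIV. g (\<sigma> p)) = (\<Sum>m<n. g m)" for g :: "nat \<Rightarrow> complex"
    by (rule sum.reindex_bij_betw[OF \<sigma>])
  have colorth: "(\<Sum>m<n. S m j * S m k) = (if j = k then int n - 1 else 0)" if "j < n" "k < n" for j k
  proof -
    have "(\<Sum>m<n. S m j * S m k) = (\<Sum>m<n. S j m * S k m)"
    proof (rule sum.cong[OF refl])
      fix m assume "m \<in> {..<n}"
      then have "S m j = - S j m" "S m k = - S k m" using Sskew that by (metis lessThan_iff)+
      then show "S m j * S m k = S j m * S k m" by simp
    qed
    then show ?thesis using Sorth[OF that] by simp
  qed
  define w where "w m j = (if m = j then 1 else 0) + \<i> * complex_of_real b * of_int (S m j)" for m j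
  define v where "v j = (\<chi> p. complex_of_real (1 / sqrt 2) * w (\<sigma> p) j)" for j
  define G where "G j k = (if j = k then 1 else \<i> * complex_of_real b * of_int (S j k))" for j k
  have wsum: "(\<Sum>m<n. cnj (w m j) * w m k) = 2 * G j k" if j: "j < n" and k: "k < n" for j k
  proof -
    have "(\<Sum>m<n. cnj (w m j) * w m k) = (\<Sum>m<n. Complex
            ((if m = j then 1 else 0) * (if m = k then 1 else 0) + b * b * of_int (S m j * S m k))
            (b * ((if m = j then 1 else 0) * of_int (S m k) - of_int (S m j) * (if m = k then 1 else 0))))"
      by (intro sum.cong refl) (simp add: w_def complex_eq_iff algebra_simps)
    also have "\<dots> = Complex ((if j = k then 1 else 0) + b * b * of_int (\<Sum>m<n. S m j * S m k))
                            (b * (of_int (S j k) - of_int (S k j)))"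
      using j k by (simp add: complex_eq_iff Re_sum Im_sum sum.distrib sum_subtractf
                      sum_distrib_left[symmetric] if_distrib[of "\<lambda>x. x * _"] if_distrib[of "\<lambda>x. _ * x"] cong: if_cong)
    also have "\<dots> = 2 * G j k"
      using colorth[OF j k] Sskew[OF j k] hb Sd[of j]
      by (auto simp: G_def complex_eq_iff algebra_simps of_nat_diff)
    finally show ?thesis .
  qed
  have vG: "herm_ip (v j) (v k) = G j k" if j: "j < n" and k: "k < n" for j k
  proof -
    have "herm_ip (v j) (v k) = (\<Sum>p\<in>UNIV. complex_of_real (1/2) * (cnj (w (\<sigma> p) j) * w (\<sigma> p) k))"
    proof -
      have s2: "cnj (complex_of_real (1/sqrt 2)) * complex_of_real (1/sqrt 2) = complex_of_real (1/2)"
        by (simp flip: of_real_mult)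
      have m: "cnj (a * x) * (a * y) = (cnj a * a) * (cnj x * y)" for a x y :: complex
        by (simp add: mult_ac)
      show ?thesis unfolding herm_ip_def v_def vec_lambda_beta m s2 ..
    qed
    also have "\<dots> = complex_of_real (1/2) * (\<Sum>m<n. cnj (w m j) * w m k)"
      by (subst sum_distrib_left[symmetric]) (simp only: reidx[of "\<lambda>m. cnj (w m j) * w m k"])
    also have "\<dots> = G j k" using wsum[OF j k] by simp
    finally show ?thesis .
  qed
  define Mx where "Mx p q = real_of_int (S (\<sigma> p) (\<sigma> q))" for p q
  have Mxsk: "Mx q p = - Mx p q" for p q using Sskew[OF \<sigma>lt[of p] \<sigma>lt[of q]] by (simp add: Mx_def)
  define \<mu> where "\<mu> = - \<i> / complex_of_real b"
  have mu0: "\<mu> \<noteq> 0" using b0 by (simp add: \<mu>_def)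
  have eig: "Lmap Mx (v j) = \<mu> *s v j" if j: "j < n" for j
  proof -
    have comp: "(\<Sum>m<n. complex_of_int (S a m) * w m j) = \<mu> * w a j" if a: "a < n" for a
    proof -
      have "(\<Sum>m<n. complex_of_int (S a m) * w m j)
          = (\<Sum>m<n. (if m = j then of_int (S a m) else 0)) + \<i> * complex_of_real b * of_int (\<Sum>m<n. S a m * S m j)"
        by (simp add: w_def distrib_left sum.distrib sum_distrib_left algebra_simps if_distrib[of "\<lambda>x. _ * x"] cong: if_cong)
      also have "(\<Sum>m<n. S a m * S m j) = - (if a = j then int n - 1 else 0)"
      proof -
        have "(\<Sum>m<n. S a m * S m j) = (\<Sum>m<n. - (S a m * S j m))"
        proof (rule sum.cong[OF refl])
          fix m assume "m \<in> {..<n}"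
          then have "S m j = - S j m" using Sskew j by (metis lessThan_iff)
          then show "S a m * S m j = - (S a m * S j m)" by simp
        qed
        then show ?thesis using Sorth[OF a j] by (simp add: sum_negf)
      qed
      also have "(\<Sum>m<n. (if m = j then complex_of_int (S a m) else 0)) = of_int (S a j)" using j by simp
      finally show ?thesis
        using b0 hb Sd[of j] n2
        by (auto simp: \<mu>_def w_def field_simps complex_eq_iff of_nat_diff)
    qed
    show ?thesis
    proof (subst vec_eq_iff, intro allI)
      fix p
      have "(Lmap Mx (v j)) $ p = complex_of_real (1 / sqrt 2) * (\<Sum>q\<in>UNIV. complex_of_int (S (\<sigma> p) (\<sigma> q)) * w (\<sigma> q) j)"
        by (simp add: Lmap_def v_def Mx_def sum_distrib_left algebra_simps)
      also have "(\<Sum>q\<in>UNIV. complex_of_int (S (\<sigma> p) (\<sigma> q)) * w (\<sigma> q) j) = (\<Sum>m<n. complex_of_int (S (\<sigma> p) m) * w m j)"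
        by (rule reidx)
      also have "\<dots> = \<mu> * w (\<sigma> p) j" by (rule comp[OF \<sigma>lt])
      finally show "(Lmap Mx (v j)) $ p = (\<mu> *s v j) $ p" by (simp add: v_def algebra_simps)
    qed
  qed
  define Pp where "Pp = {y. Lmap Mx y = \<mu> *s y}"
  have P0: "0 \<in> Pp" by (simp add: Pp_def Lmap_zero)
  have Padd: "x + y \<in> Pp" if "x \<in> Pp" "y \<in> Pp" for x y
    using that by (simp add: Pp_def Lmap_add vector_add_ldistrib)
  have Pscale: "c *s x \<in> Pp" if "x \<in> Pp" for c x
    using that by (simp add: Pp_def Lmap_scale vector_smult_assoc mult.commute)
  have vP: "\<forall>j<n. v j \<in> Pp" using eig by (simp add: Pp_def)
  obtain r e c where r: "r \<le> n"
    and on: "\<forall>t<r. \<forall>s<r. herm_ip (e t) (e s) = (if t = s then 1 else 0)"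
    and eP: "\<forall>t<r. e t \<in> Pp" and rep: "\<forall>j<n. v j = (\<Sum>t<r. c t j *s e t)"
    using GS[OF P0 Padd Pscale vP] by blast
  have co: "herm_ip (cv (e t)) (e s) = 0" if "t < r" "s < r" for t s
    using eP that by (intro eig_orth[OF Mxsk mu0]) (auto simp: Pp_def)
  have "r * 4 \<le> DIM(complex^('n \<times> bool))"
    by (rule four_bound[where e=e]) (simp_all add: on co)
  then have rd: "r \<le> CARD('n)" by simp
  obtain h :: "nat \<Rightarrow> 'n" where h: "bij_betw h {0..<CARD('n)} UNIV"
    using ex_bij_betw_nat_finite[of "UNIV :: 'n set"] by auto
  have hinj: "h t = h s \<Longrightarrow> t < r \<Longrightarrow> s < r \<Longrightarrow> t = s" for t s
    using h rd by (auto simp: bij_betw_def inj_on_def)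
  define x where "x j = (\<Sum>t<r. c t j *s axis (h t) (1::complex))" for j
  have xon: "herm_ip (axis (h t) (1::complex)) (axis (h s) 1) = (if t = s then 1 else 0)" if "t < r" "s < r" for t s
    using hinj[OF _ that] by (auto simp: herm_axis)
  show ?thesis
  proof (intro exI allI impI)
    fix j k assume j: "j < n" and k: "k < n"
    have "herm_ip (x j) (x k) = (\<Sum>t<r. cnj (c t j) * c t k)"
      unfolding x_def by (rule ortho_expand) (rule xon)
    also have "\<dots> = herm_ip (v j) (v k)"
      using rep j k on by (simp add: ortho_expand)
    also have "\<dots> = G j k" by (rule vG[OF j k])
    finally show "herm_ip (x j) (x k) = (if j = k then 1 else \<i> * complex_of_real (1 / sqrt (real n - 1)) * of_int (S j k))"
      by (simp add: G_def b_def)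
  qed
qed


lemma inner_set_cnj: assumes "a \<in> inner_set X" shows "cnj a \<in> inner_set X"
proof -
  obtain x y where xy: "a = herm_ip x y" "x \<in> X" "y \<in> X" "x \<noteq> y"
    using assms unfolding inner_set_def by blast
  have "cnj a = herm_ip y x" using xy(1) herm_ip_cnj[of y x] by simp
  then show ?thesis using xy unfolding inner_set_def by blast
qed

lemma code_props:
  assumes "complex_spherical_2code X"
  shows "inner_set X = {code_alpha X, cnj (code_alpha X)} \<and> Im (code_alpha X) > 0"
proof -
  from assms obtain a where a: "a \<in> inner_set X" "a \<notin> \<real>" and c2: "card (inner_set X) = 2"
    by (auto simp: complex_spherical_2code_def)
  have ima: "Im a \<noteq> 0" using a(2) by (auto simp: complex_is_Real_iff)
  have ca: "cnj a \<in> inner_set X" using inner_set_cnj[OF a(1)] .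
  have ne: "cnj a \<noteq> a" using ima by (auto simp: complex_eq_iff)
  have fin: "finite (inner_set X)" using c2 by (metis card.infinite zero_neq_numeral)
  have sub: "{a, cnj a} \<subseteq> inner_set X" using a ca by auto
  have eq: "inner_set X = {a, cnj a}"
    using card_subset_eq[OF fin sub] ne c2 by simp
  define b where "b = (if Im a > 0 then a else cnj a)"
  have ib: "Im b > 0" using ima by (auto simp: b_def)
  have eq2: "inner_set X = {b, cnj b}" using eq by (auto simp: b_def)
  have "code_alpha X = b"
    unfolding code_alpha_def
  proof (rule the_equality)
    show "b \<in> inner_set X \<and> 0 < Im b" using eq2 ib by simp
  next
    fix y assume "y \<in> inner_set X \<and> 0 < Im y"
    then show "y = b" using eq2 ib by auto
  qed
  then show ?thesis using eq2 ib by simp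
qed

lemma code_cf:
  assumes code: "complex_spherical_2code X" and f: "bij_betw f {..<n} X"
  shows "cf n f (code_alpha X)"
proof -
  have P: "inner_set X = {code_alpha X, cnj (code_alpha X)}" "Im (code_alpha X) > 0"
    using code_props[OF code] by auto
  have fin: "finite X" and om: "X \<subseteq> Omega" using code by (auto simp: complex_spherical_2code_def)
  have fX: "f j \<in> X" if "j < n" for j using f that by (auto simp: bij_betw_def)
  have inj: "inj_on f {..<n}" using f by (auto simp: bij_betw_def)
  have n2: "2 \<le> n"
  proof -
    have "code_alpha X \<in> inner_set X" using P(1) by simp
    then obtain x y where xy: "x \<in> X" "y \<in> X" "x \<noteq> y" unfolding inner_set_def by auto
    then have "card {x, y} \<le> card X" using fin by (intro card_mono) auto
    then have "2 \<le> card X" using xy(3) by simp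
    moreover have "card X = n" using bij_betw_same_card[OF f] by simp
    ultimately show ?thesis by simp
  qed
  show ?thesis
  proof
    show "inj_on f {..<n}" by (rule inj)
    show "herm_ip (f j) (f j) = 1" if "j < n" for j using om fX[OF that] by (auto simp: Omega_def)
    show "herm_ip (f j) (f k) = code_alpha X \<or> herm_ip (f j) (f k) = cnj (code_alpha X)"
      if "j < n" "k < n" "j \<noteq> k" for j k
    proof -
      have "f j \<noteq> f k" using inj that by (auto dest: inj_onD)
      then have "herm_ip (f j) (f k) \<in> inner_set X" using fX[OF that(1)] fX[OF that(2)] unfolding inner_set_def by auto
      then show ?thesis using P(1) by auto
    qed
    show "Im (code_alpha X) > 0" by (rule P(2))
    show "2 \<le> n" by (rule n2)
  qed
qed

lemma hadamard_iff:
  fixes S :: "nat \<Rightarrow> nat \<Rightarrow> int"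
  assumes Sd: "\<And>i. S i i = 0" and Spm: "\<And>i j. i < n \<Longrightarrow> j < n \<Longrightarrow> i \<noteq> j \<Longrightarrow> S i j = 1 \<or> S i j = -1"
    and Sskew: "\<And>i j. S j i = - S i j"
  shows "skew_hadamard n (\<lambda>i j. (if i = j then 1 else 0) + S i j) \<longleftrightarrow>
    (\<forall>i<n. \<forall>j<n. (\<Sum>k<n. S i k * S j k) = (if i = j then int n - 1 else 0))"
proof -
  have prod: "(\<Sum>k<n. ((if i = k then 1 else 0) + S i k) * ((if j = k then 1 else 0) + S j k))
      = (if i = j then 1 else 0) + (\<Sum>k<n. S i k * S j k)" if "i < n" "j < n" for i j
  proof -
    have "(\<Sum>k<n. ((if i = k then 1 else 0) + S i k) * ((if j = k then 1 else 0) + S j k))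
        = (\<Sum>k<n. (if i = k then 1 else 0) * (if j = k then 1 else 0)) + (\<Sum>k<n. (if i = k then S j k else 0))
          + (\<Sum>k<n. (if j = k then S i k else 0)) + (\<Sum>k<n. S i k * S j k)"
      by (simp add: sum.distrib algebra_simps if_distrib[of "\<lambda>x. x * _"] if_distrib[of "\<lambda>x. _ * x"] cong: if_cong)
    also have "\<dots> = (if i = j then 1 else 0) + S j i + S i j + (\<Sum>k<n. S i k * S j k)"
      using that by (simp add: if_distrib[of "\<lambda>x. x * _"] cong: if_cong)
    finally show ?thesis using Sskew[of i j] by simp
  qed
  have c1: "\<forall>i<n. \<forall>j<n. (if i = j then 1 else 0) + S i j = 1 \<or> (if i = j then 1 else 0) + S i j = -1"
    using Spm Sd by auto
  have c2: "\<forall>i<n. \<forall>j<n. (if i = j then 1 else 0) + S i j + ((if j = i then 1 else 0) + S j i) = (if i = j then 2 else 0)"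
  proof (intro allI impI)
    fix i j show "(if i = j then 1 else 0) + S i j + ((if j = i then 1 else 0) + S j i) = (if i = j then 2 else (0::int))"
      using Sskew[of i j] Sd[of i] by auto
  qed
  have eqv: "((\<Sum>k<n. ((if i = k then 1 else 0) + S i k) * ((if j = k then 1 else 0) + S j k)) = (if i = j then int n else 0))
      \<longleftrightarrow> ((\<Sum>k<n. S i k * S j k) = (if i = j then int n - 1 else 0))" if "i < n" "j < n" for i j
    using prod[OF that] by auto
  have "skew_hadamard n (\<lambda>i j. (if i = j then 1 else 0) + S i j) \<longleftrightarrow>
     (\<forall>i<n. \<forall>j<n. (\<Sum>k<n. ((if i = k then 1 else 0) + S i k) * ((if j = k then 1 else 0) + S j k)) = (if i = j then int n else 0))"
    unfolding skew_hadamard_def using c1 c2 by simp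
  also have "\<dots> \<longleftrightarrow> (\<forall>i<n. \<forall>j<n. (\<Sum>k<n. S i k * S j k) = (if i = j then int n - 1 else 0))"
    using eqv by blast
  finally show ?thesis .
qed

context cf begin

lemma rows_orth:
  assumes ev: "even CARD('n)" and nd: "n = 2 * CARD('n)" and i: "i < n" and j: "j < n"
  shows "(\<Sum>k<n. S i k * S j k) = (if i = j then int n - 1 else 0)"
proof -
  have "(\<Sum>k<n. S i k * S j k) = - T i j"
    unfolding T_def
  proof (subst sum_negf[symmetric], rule sum.cong[OF refl])
    fix k assume "k \<in> {..<n}"
    then have "S j k = - S k j" using S_skew j by (metis lessThan_iff)
    then show "S i k * S j k = - (S i k * S k j)" by simp
  qed
  then show ?thesis using part2[OF ev nd i j] T_diag[OF i] i n2 by (auto simp: of_nat_diff)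
qed

end


theorem theorem4p7:
  assumes "even CARD('n::finite)"
  shows "(\<forall>X :: (complex ^ 'n) set. complex_spherical_2code X \<longrightarrow> card X \<le> 2 * CARD('n))
    \<and> (\<forall>E. is_tournament (2 * CARD('n)) E \<longrightarrow>
          ((\<exists>X :: (complex ^ 'n) set. is_tournament_of_code (2 * CARD('n)) E X) \<longleftrightarrow>
           skew_hadamard (2 * CARD('n))
             (\<lambda>i j. (if i = j then 1 else 0) + adj_matrix E i j - adj_matrix E j i)))"
proof (intro conjI allI impI)
  note ev = assms
  fix X :: "(complex^'n) set" assume code: "complex_spherical_2code X"
  have fin: "finite X" using code by (simp add: complex_spherical_2code_def)
  obtain f where f: "bij_betw f {0..<card X} X" using ex_bij_betw_nat_finite[OF fin] by auto
  then have f': "bij_betw f {..<card X} X" by (simp add: atLeast0LessThan)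
  interpret cf "card X" f "code_alpha X" by (rule code_cf[OF code f'])
  show "card X \<le> 2 * CARD('n)" by (rule part1[OF ev])
next
  note ev = assms
  fix E assume tour: "is_tournament (2 * CARD('n)) E"
  define n where "n = 2 * CARD('n)"
  have n2: "2 \<le> n" using finite_UNIV_card_ge_0[where 'a='n] by (simp add: n_def)
  define SE where "SE i j = adj_matrix E i j - adj_matrix E j i" for i j
  have Hform: "(\<lambda>i j. (if i = j then 1 else 0) + adj_matrix E i j - adj_matrix E j i)
      = (\<lambda>i j. (if i = j then 1 else 0) + SE i j)" by (simp add: SE_def fun_eq_iff)
  have SEd: "SE i i = 0" for i by (simp add: SE_def)
  have SEskew: "SE j i = - SE i j" for i j by (simp add: SE_def)
  have SEval: "SE i j = (if E i j then 1 else -1)" if "i < n" "j < n" "i \<noteq> j" for i j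
  proof -
    have "E i j \<longleftrightarrow> \<not> E j i" using tour that unfolding is_tournament_def n_def by blast
    then show ?thesis by (auto simp: SE_def adj_matrix_def)
  qed
  have SEpm: "SE i j = 1 \<or> SE i j = -1" if "i < n" "j < n" "i \<noteq> j" for i j
    using SEval[OF that] by auto
  have Enot: "\<not> E i i" if "i < n" for i using tour that unfolding is_tournament_def n_def by blast
  have HI: "skew_hadamard n (\<lambda>i j. (if i = j then 1 else 0) + SE i j) \<longleftrightarrow>
    (\<forall>i<n. \<forall>j<n. (\<Sum>k<n. SE i k * SE j k) = (if i = j then int n - 1 else 0))"
    by (rule hadamard_iff[OF SEd SEpm SEskew])
  show "(\<exists>X :: (complex ^ 'n) set. is_tournament_of_code (2 * CARD('n)) E X) \<longleftrightarrow>
           skew_hadamard (2 * CARD('n)) (\<lambda>i j. (if i = j then 1 else 0) + adj_matrix E i j - adj_matrix E j i)"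
    unfolding Hform n_def[symmetric] HI
  proof
    assume "\<exists>X :: (complex ^ 'n) set. is_tournament_of_code n E X"
    then obtain X :: "(complex ^ 'n) set" and f where code: "complex_spherical_2code X"
      and f: "bij_betw f {..<n} X" and Ef: "\<forall>i<n. \<forall>j<n. E i j \<longleftrightarrow> code_edge X (f i) (f j)"
      by (auto simp: is_tournament_of_code_def)
    interpret cf n f "code_alpha X" by (rule code_cf[OF code f])
    have fX: "f i \<in> X" if "i < n" for i using f that by (auto simp: bij_betw_def)
    have SS: "SE i j = S i j" if i: "i < n" and j: "j < n" for i j
    proof (cases "i = j")
      case True then show ?thesis by (simp add: SEd)
    next
      case False
      have "E i j \<longleftrightarrow> herm_ip (f i) (f j) = code_alpha X"
        using Ef i j fX[OF i] fX[OF j] by (simp add: code_edge_def)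
      then show ?thesis using SEval[OF i j False] False by (simp add: S_def)
    qed
    show "\<forall>i<n. \<forall>j<n. (\<Sum>k<n. SE i k * SE j k) = (if i = j then int n - 1 else 0)"
    proof (intro allI impI)
      fix i j assume i: "i < n" and j: "j < n"
      have "(\<Sum>k<n. SE i k * SE j k) = (\<Sum>k<n. S i k * S j k)"
        by (rule sum.cong[OF refl]) (simp add: SS i j)
      also have "\<dots> = (if i = j then int n - 1 else 0)" by (rule rows_orth[OF ev n_def i j])
      finally show "(\<Sum>k<n. SE i k * SE j k) = (if i = j then int n - 1 else 0)" .
    qed
  next
    assume orth: "\<forall>i<n. \<forall>j<n. (\<Sum>k<n. SE i k * SE j k) = (if i = j then int n - 1 else 0)"
    define b where "b = 1 / sqrt (real n - 1)"
    have b0: "b > 0" using n2 by (simp add: b_def)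
    obtain x :: "nat \<Rightarrow> complex^'n" where hx0: "\<forall>j<n. \<forall>k<n. herm_ip (x j) (x k) =
        (if j = k then 1 else \<i> * complex_of_real (1 / sqrt (real n - 1)) * of_int (SE j k))"
      using construct[where S=SE, OF n_def SEd] SEskew orth by blast
    have hx: "herm_ip (x j) (x k) = (if j = k then 1 else \<i> * complex_of_real b * of_int (SE j k))"
      if "j < n" "k < n" for j k using hx0 that by (simp add: b_def)
    have hxv: "herm_ip (x j) (x k) = (if E j k then \<i> * complex_of_real b else - (\<i> * complex_of_real b))"
      if "j < n" "k < n" "j \<noteq> k" for j k using hx[OF that(1,2)] SEval[OF that] that by simp
    have ib_ne: "\<i> * complex_of_real b \<noteq> - (\<i> * complex_of_real b)" using b0 by (simp add: complex_eq_iff)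
    have ib_ne1: "\<i> * complex_of_real b \<noteq> 1" "- (\<i> * complex_of_real b) \<noteq> 1" by (simp_all add: complex_eq_iff)
    have xinj: "inj_on x {..<n}"
    proof
      fix j k assume j: "j \<in> {..<n}" and k: "k \<in> {..<n}" and eq: "x j = x k"
      show "j = k"
      proof (rule ccontr)
        assume "j \<noteq> k"
        then have "herm_ip (x j) (x k) \<noteq> 1" using hxv[of j k] j k ib_ne1 by auto
        moreover have "herm_ip (x j) (x k) = 1" using hx[of j j] j eq by simp
        ultimately show False by simp
      qed
    qed
    define X where "X = x ` {..<n}"
    have IS: "inner_set X = {\<i> * complex_of_real b, - (\<i> * complex_of_real b)}"
    proof
      show "inner_set X \<subseteq> {\<i> * complex_of_real b, - (\<i> * complex_of_real b)}"
      proof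
        fix a assume "a \<in> inner_set X"
        then obtain j k where "j < n" "k < n" "x j \<noteq> x k" "a = herm_ip (x j) (x k)"
          unfolding inner_set_def X_def by blast
        then show "a \<in> {\<i> * complex_of_real b, - (\<i> * complex_of_real b)}" using hxv[of j k] by (cases "j = k") auto
      qed
    next
      have x01: "x 0 \<noteq> x 1" using xinj n2 by (auto dest: inj_onD)
      have X01: "x 0 \<in> X" "x 1 \<in> X" using n2 by (auto simp: X_def)
      have m1: "herm_ip (x 0) (x 1) \<in> inner_set X" using x01 X01 unfolding inner_set_def by blast
      have m2: "herm_ip (x 1) (x 0) \<in> inner_set X" using x01[symmetric] X01 unfolding inner_set_def by blast
      have t: "\<forall>i<n. \<forall>j<n. i \<noteq> j \<longrightarrow> (E i j \<longleftrightarrow> \<not> E j i)"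
        using tour unfolding is_tournament_def n_def by blast
      have "E 0 1 \<longleftrightarrow> \<not> E 1 0" using n2 by (intro t[rule_format]) auto
      then show "{\<i> * complex_of_real b, - (\<i> * complex_of_real b)} \<subseteq> inner_set X"
        using m1 m2 hxv[of 0 1] hxv[of 1 0] n2 by (cases "E 0 1") auto
    qed
    have code: "complex_spherical_2code X"
      unfolding complex_spherical_2code_def
    proof (intro conjI)
      show "finite X" by (simp add: X_def)
      show "X \<subseteq> Omega" using hx by (auto simp: X_def Omega_def)
      show "card (inner_set X) = 2" using IS ib_ne by simp
      show "\<exists>a\<in>inner_set X. a \<notin> \<real>" using IS b0 by (auto simp: complex_is_Real_iff)
    qed
    have alpha: "code_alpha X = \<i> * complex_of_real b"
    proof -
      have P: "inner_set X = {code_alpha X, cnj (code_alpha X)}" "Im (code_alpha X) > 0"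
        using code_props[OF code] by auto
      have "code_alpha X \<in> inner_set X" using P(1) by simp
      then show ?thesis using IS P(2) b0 by auto
    qed
    show "\<exists>X :: (complex ^ 'n) set. is_tournament_of_code n E X"
    proof (intro exI)
      show "is_tournament_of_code n E X"
        unfolding is_tournament_of_code_def
      proof (intro conjI exI)
        show "complex_spherical_2code X" by (rule code)
        show "bij_betw x {..<n} X" using xinj by (simp add: X_def bij_betw_def)
        show "\<forall>i<n. \<forall>j<n. E i j = code_edge X (x i) (x j)"
        proof (intro allI impI)
          fix i j assume i: "i < n" and j: "j < n"
          show "E i j = code_edge X (x i) (x j)"
          proof (cases "i = j")
            case True
            then show ?thesis using Enot[OF i] hx[OF i i] ib_ne1 alpha by (auto simp: code_edge_def)
          next
            case False
            then show ?thesis using hxv[OF i j False] ib_ne alpha i j by (auto simp: code_edge_def X_def)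
          qed
        qed
      qed
    qed
  qed
qed


end
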